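(* Let $0<\varepsilon<|B|$, $r>0$, $r_{\max}=r\sqrt{\log(|B|/\varepsilon)}$, and for $c\in\mathbb{R}^d$ let $K'_c(x)=K_c(x)$ if $\|x-c\|\le r_{\max}$ and $K'_c(x)=0$ otherwise. Then for every center $c\in\mathbb{R}^d$, \[ |\Phi(K_c)-\Phi(K'_c)|\le\varepsilon. \]
   Context: $B\subset\mathbb{R}^d$ finite nonempty, $m:B\to\{0,1\}$, $M=\{x\in B:m(x)=1\}$. Gaussian kernel with center $c$ and bandwidth $r$: $K_c(x)=\exp(-\|x-c\|^2/r^2)$. For $p,q\in[0,1]$ and $K:B\to[0,1]$: $g(x)=pK(x)+q(1-K(x))$, $\ell(p,q,K)=\frac{1}{|B|}\big(\sum_{x\in M}\log g(x)+\sum_{x\in B\setminus M}\log(1-g(x))\big)$ ($\log 0=-\infty$), $\ell_0(q)=\frac1{|B|}(|M|\log q+|B\setminus M|\log(1-q))$, and $\Phi(K)=\max_{p,q\in[0,1]}\ell(p,q,K)-\max_{q\in[0,1]}\ell_0(q)$. Standing assumption: the maximizer $(p^*,q^* )$ of $\ell(\cdot,\cdot,K)$ lies in $(0,1)^2$ with finite value. *)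

theory Defs
  imports "HOL-Analysis.Analysis"
begin

definition lnE :: "real \<Rightarrow> ereal" where
  "lnE x = (if x \<le> 0 then -\<infinity> else ereal (ln x))"

definition gauss :: "'a::euclidean_space \<Rightarrow> real \<Rightarrow> 'a \<Rightarrow> real" where
  "gauss c r x = exp (- (norm (x - c))\<^sup>2 / r\<^sup>2)"

definition gauss_trunc :: "'a::euclidean_space \<Rightarrow> real \<Rightarrow> real \<Rightarrow> 'a \<Rightarrow> real" where
  "gauss_trunc c r rmax x = (if norm (x - c) \<le> rmax then gauss c r x else 0)"

definition gmix :: "real \<Rightarrow> real \<Rightarrow> ('a \<Rightarrow> real) \<Rightarrow> 'a \<Rightarrow> real" where
  "gmix p q K x = p * K x + q * (1 - K x)"

text \<open>Log-likelihood ell(p,q,K); M is the set of points with m(x) = 1.\<close>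
definition ell :: "'a set \<Rightarrow> 'a set \<Rightarrow> real \<Rightarrow> real \<Rightarrow> ('a \<Rightarrow> real) \<Rightarrow> ereal" where
  "ell B M p q K = ereal (1 / real (card B)) *
     ((\<Sum>x\<in>M. lnE (gmix p q K x)) + (\<Sum>x\<in>B - M. lnE (1 - gmix p q K x)))"

definition ell0 :: "'a set \<Rightarrow> 'a set \<Rightarrow> real \<Rightarrow> ereal" where
  "ell0 B M q = ereal (1 / real (card B)) *
     ((\<Sum>x\<in>M. lnE q) + (\<Sum>x\<in>B - M. lnE (1 - q)))"

definition maxell :: "'a set \<Rightarrow> 'a set \<Rightarrow> ('a \<Rightarrow> real) \<Rightarrow> ereal" where
  "maxell B M K = (SUP pq \<in> {0..1} \<times> {0..1}. ell B M (fst pq) (snd pq) K)"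

definition maxell0 :: "'a set \<Rightarrow> 'a set \<Rightarrow> ereal" where
  "maxell0 B M = (SUP q \<in> {0..1}. ell0 B M q)"

definition Phi :: "'a set \<Rightarrow> 'a set \<Rightarrow> ('a \<Rightarrow> real) \<Rightarrow> ereal" where
  "Phi B M K = maxell B M K - maxell0 B M"

definition standing :: "'a set \<Rightarrow> 'a set \<Rightarrow> ('a \<Rightarrow> real) \<Rightarrow> bool" where
  "standing B M K \<longleftrightarrow> (\<exists>p q. p \<in> {0<..<1} \<and> q \<in> {0<..<1} \<and>
      ell B M p q K = maxell B M K \<and> ell B M p q K \<noteq> -\<infinity> \<and> ell B M p q K \<noteq> \<infinity>)"

end

theory Submission
  imports Defs
begin

lemma lnE_le0: "y \<le> 1 \<Longrightarrow> lnE y \<le> 0"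
  by (simp add: lnE_def)

lemma ereal_mult_nonpos: "0 \<le> a \<Longrightarrow> (S::ereal) \<le> 0 \<Longrightarrow> ereal a * S \<le> 0"
  by (cases S) (auto simp: mult_nonneg_nonpos)

lemma gmix_01:
  fixes p q k :: real
  assumes "0 \<le> p" "p \<le> 1" "0 \<le> q" "q \<le> 1" "0 \<le> k" "k \<le> 1"
  shows "0 \<le> p * k + q * (1 - k)" "p * k + q * (1 - k) \<le> 1"
proof -
  have "p * k \<le> 1 * k" using assms mult_right_mono[of p 1 k] by auto
  moreover have "q * (1 - k) \<le> 1 * (1 - k)" using assms mult_right_mono[of q 1 "1 - k"] by auto
  ultimately show "p * k + q * (1 - k) \<le> 1" by simp
  show "0 \<le> p * k + q * (1 - k)" using assms by simp
qed

lemma ell_le0: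
  assumes "0 \<le> p" "p \<le> 1" "0 \<le> q" "q \<le> 1" "\<And>x. 0 \<le> K x \<and> K x \<le> 1"
  shows "ell B M p q K \<le> 0"
proof -
  have g: "0 \<le> gmix p q K x \<and> gmix p q K x \<le> 1" for x
    using gmix_01[OF assms(1-4), of "K x"] assms(5)[of x] by (simp add: gmix_def)
  have "(\<Sum>x\<in>M. lnE (gmix p q K x)) \<le> 0"
    by (rule sum_nonpos) (use g lnE_le0 in auto)
  moreover have "(\<Sum>x\<in>B - M. lnE (1 - gmix p q K x)) \<le> 0"
    by (rule sum_nonpos) (use g lnE_le0 in auto)
  ultimately have S: "(\<Sum>x\<in>M. lnE (gmix p q K x)) + (\<Sum>x\<in>B - M. lnE (1 - gmix p q K x)) \<le> 0"
    using add_mono by fastforce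
  have "ereal (1 / real (card B)) \<ge> 0" by simp
  then show ?thesis unfolding ell_def using S
    by (intro ereal_mult_nonpos) auto
qed

lemma ell_const:
  assumes "finite B" "B \<noteq> {}" "M \<subseteq> B" "0 < q" "q < 1"
  shows "ell B M q q K = ereal ((real (card M) * ln q + real (card (B - M)) * ln (1 - q)) / real (card B))"
proof -
  have "gmix q q K x = q" for x by (simp add: gmix_def algebra_simps)
  moreover have "(\<Sum>x\<in>M. ereal (ln q)) = ereal (real (card M) * ln q)" by simp
  moreover have "(\<Sum>x\<in>B - M. ereal (ln (1 - q))) = ereal (real (card (B - M)) * ln (1 - q))" by simp
  ultimately show ?thesis using assms unfolding ell_def
    by (simp add: lnE_def)
qed

lemma ell_half:
  assumes "finite B" "B \<noteq> {}" "M \<subseteq> B"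
  shows "ell B M (1/2) (1/2) K = ereal (- ln 2)"
proof -
  have c: "card (B - M) = card B - card M" using assms by (simp add: card_Diff_subset finite_subset)
  have le: "card M \<le> card B" using assms by (simp add: card_mono)
  have pos: "card B > 0" using assms by (simp add: card_gt_0_iff)
  have "ell B M (1/2) (1/2) K = ereal ((real (card M) * ln (1/2) + real (card (B - M)) * ln (1 - 1/2)) / real (card B))"
    using assms by (intro ell_const) auto
  also have "(real (card M) * ln (1/2) + real (card (B - M)) * ln (1 - 1/2)) = real (card B) * ln (1/2)"
    using c le by (simp add: of_nat_diff algebra_simps)
  also have "\<dots> / real (card B) = - ln 2" using pos by (simp add: ln_div)
  finally show ?thesis .
qed

lemma ell0_eq: "ell0 B M q = ell B M q q K"
proof -
  have "gmix q q K x = q" for x by (simp add: gmix_def algebra_simps)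
  then show ?thesis by (simp add: ell_def ell0_def)
qed

lemma lnE_transfer:
  assumes "0 \<le> s" "s < 1" "y2 \<ge> (1 - s) * y1"
  shows "lnE y1 + ereal (ln (1 - s)) \<le> lnE y2"
proof (cases "y1 \<le> 0")
  case True then show ?thesis by (simp add: lnE_def)
next
  case False
  then have "(1 - s) * y1 > 0" using assms by simp
  then have "y2 > 0" using assms by linarith
  have "ln ((1 - s) * y1) \<le> ln y2" using \<open>(1 - s) * y1 > 0\<close> assms by simp
  moreover have "ln ((1 - s) * y1) = ln (1 - s) + ln y1" using False assms by (simp add: ln_mult)
  ultimately show ?thesis using False \<open>y2 > 0\<close> by (simp add: lnE_def)
qed

lemma ell_transfer:
  assumes "finite B" "B \<noteq> {}" "M \<subseteq> B" "0 \<le> s" "s < 1"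
    and H: "\<And>x. x \<in> B \<Longrightarrow> gmix p2 q2 K2 x \<ge> (1 - s) * gmix p1 q1 K1 x \<and>
                  1 - gmix p2 q2 K2 x \<ge> (1 - s) * (1 - gmix p1 q1 K1 x)"
  shows "ell B M p1 q1 K1 + ereal (ln (1 - s)) \<le> ell B M p2 q2 K2"
proof -
  define c where "c = ln (1 - s)"
  define S1 where "S1 = (\<Sum>x\<in>M. lnE (gmix p1 q1 K1 x)) + (\<Sum>x\<in>B - M. lnE (1 - gmix p1 q1 K1 x))"
  define S2 where "S2 = (\<Sum>x\<in>M. lnE (gmix p2 q2 K2 x)) + (\<Sum>x\<in>B - M. lnE (1 - gmix p2 q2 K2 x))"
  have fM: "finite M" using assms finite_subset by blast
  have c: "card (B - M) = card B - card M" using assms by (simp add: card_Diff_subset finite_subset)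
  have le: "card M \<le> card B" using assms by (simp add: card_mono)
  have pos: "card B > 0" using assms by (simp add: card_gt_0_iff)
  have A1: "(\<Sum>x\<in>M. lnE (gmix p1 q1 K1 x) + ereal c) \<le> (\<Sum>x\<in>M. lnE (gmix p2 q2 K2 x))"
    by (rule sum_mono) (use H assms lnE_transfer c_def in auto)
  have A2: "(\<Sum>x\<in>B - M. lnE (1 - gmix p1 q1 K1 x) + ereal c) \<le> (\<Sum>x\<in>B - M. lnE (1 - gmix p2 q2 K2 x))"
    by (rule sum_mono) (use H assms lnE_transfer c_def in auto)
  have "(\<Sum>x\<in>M. lnE (gmix p1 q1 K1 x) + ereal c) = (\<Sum>x\<in>M. lnE (gmix p1 q1 K1 x)) + ereal (real (card M) * c)"
    by (simp add: sum.distrib)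
  moreover have "(\<Sum>x\<in>B - M. lnE (1 - gmix p1 q1 K1 x) + ereal c) = (\<Sum>x\<in>B - M. lnE (1 - gmix p1 q1 K1 x)) + ereal (real (card (B - M)) * c)"
    by (simp add: sum.distrib)
  ultimately have "S1 + ereal (real (card M) * c) + ereal (real (card (B - M)) * c) \<le> S2"
    using add_mono[OF A1 A2] unfolding S1_def S2_def by (simp add: ac_simps)
  moreover have "real (card M) * c + real (card (B - M)) * c = real (card B) * c"
    using c le by (simp add: of_nat_diff algebra_simps)
  ultimately have S: "S1 + ereal (real (card B) * c) \<le> S2"
    by (metis add.assoc plus_ereal.simps(1))
  have S1ne: "S1 \<noteq> \<infinity>" unfolding S1_def
    by (simp add: lnE_def sum_Pinfty)
  have "ereal (1 / real (card B)) * S1 + ereal c = ereal (1 / real (card B)) * (S1 + ereal (real (card B) * c))"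
  proof (cases S1)
    case (real v) then show ?thesis using pos by (simp add: field_simps)
  next
    case PInf then show ?thesis using S1ne by simp
  next
    case MInf then show ?thesis using pos by simp
  qed
  also have "\<dots> \<le> ereal (1 / real (card B)) * S2"
    using S by (intro ereal_mult_left_mono) auto
  finally show ?thesis unfolding ell_def S1_def S2_def c_def .
qed

lemma pointA:
  fixes p q s k1 k2 :: real
  assumes "0 \<le> p" "p \<le> 1" "0 \<le> q" "q \<le> 1" "0 \<le> s" "s < 1" "0 \<le> k1" "k1 \<le> 1"
    and "k2 = k1 \<or> (k2 = 0 \<and> k1 \<le> s)"
  shows "(p * k2 + ((1 - s) * q + s * p) * (1 - k2) \<ge> (1 - s) * (p * k1 + q * (1 - k1))) \<and> (1 - (p * k2 + ((1 - s) * q + s * p) * (1 - k2)) \<ge> (1 - s) * (1 - (p * k1 + q * (1 - k1))))"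
  using assms(9)
proof (elim disjE conjE)
  assume "k2 = k1"
  show "(p * k2 + ((1 - s) * q + s * p) * (1 - k2) \<ge> (1 - s) * (p * k1 + q * (1 - k1))) \<and> (1 - (p * k2 + ((1 - s) * q + s * p) * (1 - k2)) \<ge> (1 - s) * (1 - (p * k1 + q * (1 - k1))))"
  proof -
    have "s * p \<ge> 0" "s * (1 - p) \<ge> 0" using assms by auto
    then show "(p * k2 + ((1 - s) * q + s * p) * (1 - k2) \<ge> (1 - s) * (p * k1 + q * (1 - k1))) \<and> (1 - (p * k2 + ((1 - s) * q + s * p) * (1 - k2)) \<ge> (1 - s) * (1 - (p * k1 + q * (1 - k1))))"
      using \<open>k2 = k1\<close> by (simp_all add: algebra_simps)
  qed
next
  assume h: "k2 = 0" "k1 \<le> s"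
  have a: "(1 - s) * k1 * q \<ge> 0" using assms by simp
  have ks: "0 \<le> k1 * s" using assms by simp
  have sk: "s - (1 - s) * k1 \<ge> 0" using ks h by (simp add: algebra_simps)
  have b: "p * (s - (1 - s) * k1) \<ge> 0"
    using assms sk by simp
  have a2: "(1 - s) * k1 * (1 - q) \<ge> 0" using assms by simp
  have b2: "(1 - p) * (s - (1 - s) * k1) \<ge> 0"
    using assms sk by simp
  have "p * k2 + ((1 - s) * q + s * p) * (1 - k2) \<ge> (1 - s) * (p * k1 + q * (1 - k1))"
    using a b h by (simp add: algebra_simps)
  moreover have "1 - (p * k2 + ((1 - s) * q + s * p) * (1 - k2)) \<ge> (1 - s) * (1 - (p * k1 + q * (1 - k1)))"
    using a2 b2 h by (simp add: algebra_simps)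
  ultimately show ?thesis by blast
qed

lemma pointB:
  fixes p q s k1 k2 :: real
  assumes "0 \<le> p" "p \<le> 1" "0 \<le> q" "q \<le> 1" "0 \<le> s" "s < 1" "0 \<le> k1" "k1 \<le> 1"
    and "k2 = k1 \<or> (k2 = 0 \<and> k1 \<le> s)"
  shows "(p * k1 + q * (1 - k1) \<ge> (1 - s) * (p * k2 + q * (1 - k2))) \<and> (1 - (p * k1 + q * (1 - k1)) \<ge> (1 - s) * (1 - (p * k2 + q * (1 - k2))))"
  using assms(9)
proof (elim disjE conjE)
  assume "k2 = k1"
  show "(p * k1 + q * (1 - k1) \<ge> (1 - s) * (p * k2 + q * (1 - k2))) \<and> (1 - (p * k1 + q * (1 - k1)) \<ge> (1 - s) * (1 - (p * k2 + q * (1 - k2))))"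
  proof -
    have g: "0 \<le> p * k1 + q * (1 - k1)" "p * k1 + q * (1 - k1) \<le> 1" using assms gmix_01[of p q k1] by auto
    have "s * (p * k1 + q * (1 - k1)) \<ge> 0" "s * (1 - (p * k1 + q * (1 - k1))) \<ge> 0"
      using g assms by auto
    then show "(p * k1 + q * (1 - k1) \<ge> (1 - s) * (p * k2 + q * (1 - k2))) \<and> (1 - (p * k1 + q * (1 - k1)) \<ge> (1 - s) * (1 - (p * k2 + q * (1 - k2))))"
      using \<open>k2 = k1\<close> by (simp_all add: algebra_simps)
  qed
next
  assume h: "k2 = 0" "k1 \<le> s"
  have a: "(s - k1) * q \<ge> 0" "k1 * p \<ge> 0" "(s - k1) * (1 - q) \<ge> 0" "k1 * (1 - p) \<ge> 0"
    using assms h by auto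
  show "(p * k1 + q * (1 - k1) \<ge> (1 - s) * (p * k2 + q * (1 - k2))) \<and> (1 - (p * k1 + q * (1 - k1)) \<ge> (1 - s) * (1 - (p * k2 + q * (1 - k2))))"
    using a h by (simp_all add: algebra_simps)
qed


lemma maxell_ge0_triv:
  assumes "M = B \<or> M = {}"
  shows "maxell B M K \<ge> 0"
proof -
  have "ell B M 1 1 K = 0" if "M = B" using that by (simp add: ell_def gmix_def lnE_def)
  moreover have "ell B M 0 0 K = 0" if "M = {}" using that by (simp add: ell_def gmix_def lnE_def)
  moreover have "ell B M 1 1 K \<le> maxell B M K" unfolding maxell_def
    by (rule SUP_upper2[of "(1,1)"]) auto
  moreover have "ell B M 0 0 K \<le> maxell B M K" unfolding maxell_def
    by (rule SUP_upper2[of "(0,0)"]) auto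
  ultimately show ?thesis using assms by force
qed

theorem lemmaA3:
  fixes B M :: "'a::euclidean_space set" and eps r :: real and c :: 'a
  assumes "finite B" and "B \<noteq> {}" and "M \<subseteq> B"
    and "0 < eps" and "eps < real (card B)" and "0 < r"
    and "standing B M (gauss c r)"
    and "standing B M (gauss_trunc c r (r * sqrt (ln (real (card B) / eps))))"
  shows "\<bar>Phi B M (gauss c r) - Phi B M (gauss_trunc c r (r * sqrt (ln (real (card B) / eps))))\<bar>
           \<le> ereal eps"
proof -
  define N where "N = real (card B)"
  define L where "L = ln (N / eps)"
  define rmax where "rmax = r * sqrt (ln (real (card B) / eps))"
  define K1 where "K1 = gauss c r"
  define K2 where "K2 = gauss_trunc c r rmax"
  define s where "s = eps / N"
  have Npos: "N > 0" using assms by (simp add: N_def card_gt_0_iff)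
  have s0: "0 < s" "s < 1" using assms Npos by (auto simp: s_def N_def)
  have L0: "L > 0" using assms Npos by (simp add: L_def N_def)
  have rmax2: "rmax ^ 2 = r ^ 2 * L" "rmax \<ge> 0"
    using L0 assms by (auto simp: rmax_def L_def N_def power_mult_distrib)
  have K1r: "0 \<le> K1 x \<and> K1 x \<le> 1" for x
    by (simp add: K1_def gauss_def)
  have K2r: "0 \<le> K2 x \<and> K2 x \<le> 1" for x
    using K1r[of x] by (simp add: K2_def gauss_trunc_def K1_def)
  have rel: "K2 x = K1 x \<or> (K2 x = 0 \<and> K1 x \<le> s)" for x
  proof (cases "norm (x - c) \<le> rmax")
    case True then show ?thesis by (simp add: K2_def K1_def gauss_trunc_def)
  next
    case False
    then have "(norm (x - c)) ^ 2 > rmax ^ 2" using rmax2 by (intro power_strict_mono) auto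
    then have "(norm (x - c)) ^ 2 > r ^ 2 * L" using rmax2 by simp
    then have "(norm (x - c)) ^ 2 / r ^ 2 > L" using assms by (simp add: field_simps)
    then have "K1 x \<le> exp (- L)" by (simp add: K1_def gauss_def)
    also have "exp (- L) = s" using assms Npos
      by (simp add: L_def s_def exp_minus)
    finally show ?thesis using False by (simp add: K2_def gauss_trunc_def)
  qed
  obtain p1 q1 where P1: "p1 \<in> {0<..<1}" "q1 \<in> {0<..<1}" "ell B M p1 q1 K1 = maxell B M K1"
    "ell B M p1 q1 K1 \<noteq> -\<infinity>" "ell B M p1 q1 K1 \<noteq> \<infinity>"
    using assms(7) unfolding standing_def K1_def by blast
  obtain p2 q2 where P2: "p2 \<in> {0<..<1}" "q2 \<in> {0<..<1}" "ell B M p2 q2 K2 = maxell B M K2"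
    "ell B M p2 q2 K2 \<noteq> -\<infinity>" "ell B M p2 q2 K2 \<noteq> \<infinity>"
    using assms(8) unfolding standing_def K2_def rmax_def by blast
  obtain a where a: "maxell B M K1 = ereal a" using P1 by (cases "maxell B M K1") auto
  obtain a' where a': "maxell B M K2 = ereal a'" using P2 by (cases "maxell B M K2") auto
  have a_le: "a \<le> 0" using ell_le0[of p1 q1 K1 B M] P1 a K1r by auto
  have a'_le: "a' \<le> 0" using ell_le0[of p2 q2 K2 B M] P2 a' K2r by auto
  have half: "ell B M (1/2) (1/2) K \<le> maxell B M K" for K unfolding maxell_def
    by (rule SUP_upper2[of "(1/2,1/2)"]) auto
  have a_ge: "a \<ge> - ln 2" using half[of K1] a ell_half[OF assms(1-3)] by simp
  have a'_ge: "a' \<ge> - ln 2" using half[of K2] a' ell_half[OF assms(1-3)] by simp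
  define c0 where "c0 = ln (1 - s)"
  have c0: "c0 \<le> 0" using s0 by (simp add: c0_def)
  have A: "a \<le> a' - c0"
  proof -
    have "ell B M (fst pq) (snd pq) K1 \<le> ereal (a' - c0)" if pqin: "pq \<in> {0..1} \<times> {0..1}" for pq
    proof -
      obtain p q where pq: "pq = (p, q)" "0 \<le> p" "p \<le> 1" "0 \<le> q" "q \<le> 1" using pqin by (cases pq) auto
      define q' where "q' = (1 - s) * q + s * p"
      have q'r: "0 \<le> q'" "q' \<le> 1"
      proof -
        have "(1 - s) * q \<le> (1 - s) * 1" "s * p \<le> s * 1" using pq s0 by (intro mult_left_mono; simp)+
        then show "q' \<le> 1" by (simp add: q'_def)
        show "0 \<le> q'" using pq s0 by (simp add: q'_def)
      qed
      have "ell B M p q K1 + ereal c0 \<le> ell B M p q' K2"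
        unfolding c0_def
        by (rule ell_transfer[OF assms(1-3)]) (use s0 pointA[OF pq(2-5), of s "K1 _" "K2 _"] K1r rel in \<open>auto simp: gmix_def q'_def\<close>)
      also have "\<dots> \<le> maxell B M K2" unfolding maxell_def
        by (rule SUP_upper2[of "(p,q')"]) (use pq q'r in auto)
      finally show ?thesis using a' pq by (cases "ell B M p q K1") auto
    qed
    then have "maxell B M K1 \<le> ereal (a' - c0)" unfolding maxell_def by (rule SUP_least)
    then show ?thesis using a by simp
  qed
  have B: "a' \<le> a - c0"
  proof -
    have "ell B M (fst pq) (snd pq) K2 \<le> ereal (a - c0)" if pqin: "pq \<in> {0..1} \<times> {0..1}" for pq
    proof -
      obtain p q where pq: "pq = (p, q)" "0 \<le> p" "p \<le> 1" "0 \<le> q" "q \<le> 1" using pqin by (cases pq) auto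
      have "ell B M p q K2 + ereal c0 \<le> ell B M p q K1"
        unfolding c0_def
        by (rule ell_transfer[OF assms(1-3)]) (use s0 pointB[OF pq(2-5), of s "K1 _" "K2 _"] K1r rel in \<open>auto simp: gmix_def\<close>)
      also have "\<dots> \<le> maxell B M K1" unfolding maxell_def
        by (rule SUP_upper2[of "(p,q)"]) (use pq in auto)
      finally show ?thesis using a pq by (cases "ell B M p q K2") auto
    qed
    then have "maxell B M K2 \<le> ereal (a - c0)" unfolding maxell_def by (rule SUP_least)
    then show ?thesis using a' by simp
  qed
  have Zle: "maxell0 B M \<le> ereal a"
    unfolding maxell0_def
  proof (rule SUP_least)
    fix q :: real assume "q \<in> {0..1}"
    then have "ell B M q q K1 \<le> maxell B M K1" unfolding maxell_def
      by (intro SUP_upper2[of "(q,q)"]) auto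
    then show "ell0 B M q \<le> ereal a" using a ell0_eq[of B M q K1] by simp
  qed
  have Zge: "ereal (- ln 2) \<le> maxell0 B M"
  proof -
    have "ell0 B M (1/2) \<le> maxell0 B M" unfolding maxell0_def by (rule SUP_upper) auto
    then show ?thesis using ell0_eq[of B M "1/2" K1] ell_half[OF assms(1-3)] by simp
  qed
  obtain z where z: "maxell0 B M = ereal z" using Zle Zge by (cases "maxell0 B M") auto
  have key: "\<bar>a - a'\<bar> \<le> eps"
  proof (cases "eps \<ge> 1")
    case True
    then show ?thesis using a_le a'_le a_ge a'_ge ln_2_less_1 by linarith
  next
    case False
    show ?thesis
    proof (cases "card B = 1")
      case True
      then obtain b where "B = {b}" using card_1_singletonE by blast
      then have "M = B \<or> M = {}" using assms(3) by auto
      then have "maxell B M K1 \<ge> 0" "maxell B M K2 \<ge> 0" using maxell_ge0_triv[of M B] by blast+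
      then have "a \<ge> 0" "a' \<ge> 0" using a a' by simp_all
      then show ?thesis using a_le a'_le assms by simp
    next
      case c1: False
      then have N2: "N \<ge> 2" using Npos by (simp add: N_def)
      have sh: "s \<le> 1/2" using False N2 assms by (simp add: s_def field_simps)
      have "- c0 = ln (1 / (1 - s))" using s0 by (simp add: c0_def ln_div)
      also have "\<dots> \<le> 1 / (1 - s) - 1" using s0 by (intro ln_le_minus_one) simp
      also have "\<dots> = s / (1 - s)" using s0 by (simp add: field_simps)
      also have "\<dots> \<le> 2 * s" using s0 sh by (simp add: field_simps)
      also have "\<dots> \<le> N * s" using N2 s0 by (intro mult_right_mono) auto
      also have "\<dots> = eps" using Npos by (simp add: s_def)
      finally show ?thesis using A B by linarith
    qed
  qed
  have "Phi B M (gauss c r) - Phi B M (gauss_trunc c r (r * sqrt (ln (real (card B) / eps))))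
        = ereal (a - a')"
    using a a' z unfolding Phi_def K1_def K2_def rmax_def by simp
  then show ?thesis using key by simp
qed

end
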